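(* Let $(c_t)_{t\ge0}$ be a solution to Smoluchowski's equation with multiplicative kernel (in the sense defined in the context) with initial condition $c_0$ satisfying $\langle c_0,m^2\rangle=\sum_{m\ge1}m^2c_0(m)<\infty$. Then $t\mapsto\langle c_t,m^2\rangle$ is bounded in a neighborhood of $0$, i.e. there is $\varepsilon>0$ with $\sup_{t\in[0,\varepsilon]}\sum_{m\ge1}m^2 c_t(m)<\infty$.
   Context: For $f,g:\mathbb{N}\to\mathbb{R}^+$ write $\langle f,g\rangle=\sum_{m\ge1}f(m)g(m)$, and write $m$, $m^2$ for the functions $m\mapsto m$, $m\mapsto m^2$. A family $(c_t(m),m\ge1)_{t\ge0}$ of nonnegative functions, each $t\mapsto c_t(m)$ continuous, is a solution to Smoluchowski's equation with initial condition $c_0\in[0,\infty)^{\mathbb{N}}$ if (i) for every $t\ge0$, $\int_0^t\langle m,c_s\rangle^2\,ds<\infty$, and (ii) for every $t\ge0$ and every $f:\mathbb{N}\to[0,\infty)$ with finite support, \[ \langle c_t,f\rangle-\langle c_0,f\rangle=\frac12\int_0^t\sum_{m,m'\ge1}mm'c_s(m)c_s(m')\big(f(m+m')-f(m)-f(m')\big)\,ds. \] *)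

theory Defs
  imports "HOL-Analysis.Analysis"
begin

definition pairing :: "(nat \<Rightarrow> real) \<Rightarrow> (nat \<Rightarrow> real) \<Rightarrow> ennreal" where
  "pairing f g = nn_integral (count_space {1..}) (\<lambda>m. ennreal (f m * g m))"

definition pairing_fin :: "(nat \<Rightarrow> real) \<Rightarrow> (nat \<Rightarrow> real) \<Rightarrow> real" where
  "pairing_fin c f = (\<Sum>m\<in>{m. 1 \<le> m \<and> f m \<noteq> 0}. c m * f m)"

definition coag :: "(nat \<Rightarrow> real) \<Rightarrow> (nat \<Rightarrow> real) \<Rightarrow> real" where
  "coag c f = infsum (\<lambda>(m, m'). real m * real m' * c m * c m' * (f (m + m') - f m - f m'))
                     ({1..} \<times> {1..})"

definition smol_solution :: "(real \<Rightarrow> nat \<Rightarrow> real) \<Rightarrow> bool" where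
  "smol_solution c \<longleftrightarrow>
     (\<forall>t\<ge>0. \<forall>m\<ge>1. c t m \<ge> 0) \<and>
     (\<forall>m\<ge>1. continuous_on {0..} (\<lambda>t. c t m)) \<and>
     (\<forall>t\<ge>0. (\<integral>\<^sup>+ s. indicator {0..t} s * (pairing (\<lambda>m. real m) (c s))\<^sup>2 \<partial>lborel) < \<infinity>) \<and>
     (\<forall>t\<ge>0. \<forall>f::nat \<Rightarrow> real. (\<forall>m. f m \<ge> 0) \<and> finite {m. f m \<noteq> 0} \<longrightarrow>
        pairing_fin (c t) f - pairing_fin (c 0) f
          = 1/2 * (LINT s:{0..t}|lborel. coag (c s) f))"

end

theory Submission imports Defs begin

lemma barrier:
  fixes M :: "real \<Rightarrow> real" and K :: real
  assumes cont: "continuous_on {0..} M"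
    and nn: "\<And>t. t \<ge> 0 \<Longrightarrow> M t \<ge> 0"
    and K: "M 0 \<le> K" "K \<ge> 0"
    and ineq: "\<And>t. t \<ge> 0 \<Longrightarrow> M t \<le> M 0 + (LINT s:{0..t}|lborel. (M s)\<^sup>2)"
    and t: "0 \<le> t" "t \<le> 1 / (2 * (2*K+1)\<^sup>2)"
  shows "M t \<le> 2*K+1"
proof (rule ccontr)
  define B where "B = 2*K+1"
  define \<epsilon> where "\<epsilon> = 1 / (2 * B\<^sup>2)"
  have Bpos: "B > 0" using K by (simp add: B_def)
  assume "\<not> M t \<le> 2*K+1"
  hence Mt: "M t > B" by (simp add: B_def)
  define T where "T = {0..\<epsilon>} \<inter> M -` {B..}"
  have contE: "continuous_on {0..\<epsilon>} M" using cont by (rule continuous_on_subset) auto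
  have "closed T" unfolding T_def by (rule continuous_closed_preimage[OF contE]) auto
  moreover have "t \<in> T" using t Mt by (auto simp: T_def \<epsilon>_def B_def)
  moreover have "bdd_below T" unfolding T_def by (rule bdd_belowI[of _ 0]) auto
  ultimately have ts: "Inf T \<in> T" and low: "\<And>x. x \<in> T \<Longrightarrow> Inf T \<le> x"
    using closed_contains_Inf cInf_lower by blast+
  define s where "s = Inf T"
  have s0: "0 \<le> s" "s \<le> \<epsilon>" and Ms: "M s \<ge> B" using ts by (auto simp: s_def T_def)
  have "M 0 \<le> B" using K by (simp add: B_def)
  have contS: "continuous_on {0..s} M" using cont by (rule continuous_on_subset) auto
  obtain x where x: "0 \<le> x" "x \<le> s" "M x = B"
    using IVT'[of M 0 B s, OF \<open>M 0 \<le> B\<close> Ms s0(1) contS] by blast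
  have "x \<in> T" using x s0 by (auto simp: T_def)
  hence "s \<le> x" using low s_def by auto
  hence Mseq: "M s = B" using x by auto
  have bound: "\<And>y. y \<in> {0..s} \<Longrightarrow> M y \<le> B"
  proof -
    fix y assume y: "y \<in> {0..s}"
    show "M y \<le> B"
    proof (cases "y = s")
      case True thus ?thesis using Mseq by simp
    next
      case False
      hence "y < s" using y by auto
      hence "y \<notin> T" using low s_def by force
      thus ?thesis using y s0 by (auto simp: T_def)
    qed
  qed
  have contS2: "continuous_on {0..s} (\<lambda>y. (M y)\<^sup>2)" by (intro continuous_intros contS)
  have "(LINT y:{0..s}|lborel. (M y)\<^sup>2) \<le> (LINT y:{0..s}|lborel. B\<^sup>2)"
  proof (rule set_integral_mono)
    show "set_integrable lborel {0..s} (\<lambda>y. (M y)\<^sup>2)" by (rule borel_integrable_atLeastAtMost'[OF contS2])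
    show "set_integrable lborel {0..s} (\<lambda>y. B\<^sup>2)" by (rule borel_integrable_atLeastAtMost') (intro continuous_intros)
    fix y assume "y \<in> {0..s}"
    thus "(M y)\<^sup>2 \<le> B\<^sup>2" using bound nn by (intro power_mono) auto
  qed
  also have "\<dots> = s * B\<^sup>2" using s0 by (simp add: set_integral_const)
  also have "\<dots> \<le> \<epsilon> * B\<^sup>2" using s0 by (intro mult_right_mono) auto
  also have "\<dots> = 1/2" using Bpos by (simp add: \<epsilon>_def)
  finally have "B \<le> K + 1/2" using ineq[OF s0(1)] Mseq K by linarith
  thus False using K by (simp add: B_def)
qed

definition fn :: "nat \<Rightarrow> nat \<Rightarrow> real" where "fn n m = (if m \<le> n then (real m)\<^sup>2 else 0)"
definition Mn :: "(nat \<Rightarrow> real) \<Rightarrow> nat \<Rightarrow> real" where "Mn d n = (\<Sum>m\<in>{1..n}. d m * (real m)\<^sup>2)"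

lemma pf_fn: "pairing_fin d (fn n) = Mn d n"
proof -
  have "{m. 1 \<le> m \<and> fn n m \<noteq> 0} = {1..n}" by (auto simp: fn_def)
  thus ?thesis unfolding pairing_fin_def Mn_def by (simp add: fn_def)
qed

lemma coag_le:
  assumes nn: "\<And>m. m \<ge> 1 \<Longrightarrow> d m \<ge> 0"
  shows "coag d (fn n) \<le> 2 * (Mn d n)\<^sup>2"
proof (cases "(\<lambda>(m, m'). real m * real m' * d m * d m' * (fn n (m + m') - fn n m - fn n m')) summable_on ({1..} \<times> {1..})")
  case False
  thus ?thesis unfolding coag_def by (simp add: infsum_not_exists)
next
  case True
  define g where "g = (\<lambda>(m::nat, m'::nat). 2 * (d m * (real m)\<^sup>2) * (d m' * (real m')\<^sup>2))"
  have "coag d (fn n) \<le> infsum g ({1..n} \<times> {1..n})"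
    unfolding coag_def
  proof (rule infsum_mono_neutral[OF True])
    show "g summable_on {1..n} \<times> {1..n}" by simp
  next
    fix x assume x: "x \<in> {1..} \<times> {1..} \<inter> {1..n} \<times> {1..n}"
    obtain m m' where xm: "x = (m, m')" by force
    have dm: "d m \<ge> 0" "d m' \<ge> 0" using x nn xm by auto
    have p: "real m * real m' * d m * d m' \<ge> 0" using dm by simp
    show "(case x of (m, m') \<Rightarrow> real m * real m' * d m * d m' * (fn n (m + m') - fn n m - fn n m')) \<le> g x"
    proof (cases "m + m' \<le> n")
      case True
      hence "fn n (m + m') - fn n m - fn n m' = 2 * real m * real m'" by (auto simp: fn_def power2_eq_square algebra_simps)
      thus ?thesis using xm by (simp add: g_def power2_eq_square algebra_simps)
    next
      case False
      hence "fn n (m + m') - fn n m - fn n m' \<le> 0" by (auto simp: fn_def)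
      hence "real m * real m' * d m * d m' * (fn n (m + m') - fn n m - fn n m') \<le> 0"
        using p mult_nonneg_nonpos by blast
      moreover have "g x \<ge> 0" using xm dm by (simp add: g_def)
      ultimately show ?thesis using xm by simp
    qed
  next
    fix x assume x: "x \<in> {1..} \<times> {1..} - {1..n} \<times> {1..n}"
    obtain m m' where xm: "x = (m, m')" by force
    have dm: "d m \<ge> 0" "d m' \<ge> 0" using x nn xm by auto
    have p: "real m * real m' * d m * d m' \<ge> 0" using dm by simp
    have "\<not> m + m' \<le> n" using x xm by auto
    hence "fn n (m + m') - fn n m - fn n m' \<le> 0" by (auto simp: fn_def)
    hence "real m * real m' * d m * d m' * (fn n (m + m') - fn n m - fn n m') \<le> 0"
      using p mult_nonneg_nonpos by blast
    thus "(case x of (m, m') \<Rightarrow> real m * real m' * d m * d m' * (fn n (m + m') - fn n m - fn n m')) \<le> 0"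
      using xm by simp
  next
    fix x assume x: "x \<in> {1..n} \<times> {1..n} - {1..} \<times> {1..}"
    thus "0 \<le> g x" by auto
  qed
  also have "\<dots> = (\<Sum>m\<in>{1..n}. \<Sum>m'\<in>{1..n}. 2 * (d m * (real m)\<^sup>2) * (d m' * (real m')\<^sup>2))"
    by (simp add: g_def sum.cartesian_product)
  also have "\<dots> = 2 * ((\<Sum>m\<in>{1..n}. d m * (real m)\<^sup>2) * (\<Sum>m'\<in>{1..n}. d m' * (real m')\<^sup>2))"
    by (subst sum_product) (simp only: sum_distrib_left mult.assoc)
  also have "\<dots> = 2 * (Mn d n)\<^sup>2"
    by (simp add: Mn_def power2_eq_square)
  finally show ?thesis .
qed


lemma sum_h:
  assumes nn: "\<And>m. m \<ge> 1 \<Longrightarrow> d m \<ge> 0"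
  shows "(\<Sum>i\<le>n. ennreal (d i * (real i)\<^sup>2) * indicator {1..} i) = ennreal (Mn d n)"
proof -
  have "(\<Sum>i\<le>n. ennreal (d i * (real i)\<^sup>2) * indicator {1..} i) = (\<Sum>i\<in>{1..n}. ennreal (d i * (real i)\<^sup>2) * indicator {1..} i)"
    by (rule sum.mono_neutral_right) auto
  also have "\<dots> = (\<Sum>i\<in>{1..n}. ennreal (d i * (real i)\<^sup>2))" by (rule sum.cong) auto
  also have "\<dots> = ennreal (Mn d n)" unfolding Mn_def using nn by (subst sum_ennreal) auto
  finally show ?thesis .
qed

lemma pairing_suminf: "pairing d (\<lambda>m. (real m)\<^sup>2) = (\<Sum>i. ennreal (d i * (real i)\<^sup>2) * indicator {1..} i)"
  unfolding pairing_def by (simp add: nn_integral_count_space_indicator nn_integral_count_space_nat)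

lemma partial_le:
  assumes nn: "\<And>m. m \<ge> 1 \<Longrightarrow> d m \<ge> 0"
  shows "ennreal (Mn d n) \<le> pairing d (\<lambda>m. (real m)\<^sup>2)"
proof -
  have "ennreal (Mn d n) = (\<Sum>i<Suc n. ennreal (d i * (real i)\<^sup>2) * indicator {1..} i)"
    unfolding lessThan_Suc_atMost by (rule sum_h[OF nn, symmetric])
  also have "\<dots> \<le> (SUP n. \<Sum>i<n. ennreal (d i * (real i)\<^sup>2) * indicator {1..} i)"
    by (rule SUP_upper) auto
  finally show ?thesis unfolding pairing_suminf suminf_eq_SUP .
qed

lemma pairing_le:
  assumes nn: "\<And>m. m \<ge> 1 \<Longrightarrow> d m \<ge> 0" and b: "\<And>n. Mn d n \<le> B"
  shows "pairing d (\<lambda>m. (real m)\<^sup>2) \<le> ennreal B"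
  unfolding pairing_suminf suminf_eq_SUP
proof (rule SUP_least)
  fix n :: nat
  have "(\<Sum>i<n. ennreal (d i * (real i)\<^sup>2) * indicator {1..} i) \<le> (\<Sum>i\<le>n. ennreal (d i * (real i)\<^sup>2) * indicator {1..} i)"
    by (rule sum_mono2) auto
  also have "\<dots> = ennreal (Mn d n)" by (rule sum_h[OF nn])
  also have "\<dots> \<le> ennreal B" using b by (rule ennreal_leI)
  finally show "(\<Sum>i<n. ennreal (d i * (real i)\<^sup>2) * indicator {1..} i) \<le> ennreal B" .
qed

theorem lemma2p3:
  fixes c :: "real \<Rightarrow> nat \<Rightarrow> real"
  assumes "smol_solution c"
    and "pairing (c 0) (\<lambda>m. (real m)\<^sup>2) < \<infinity>"
  shows "\<exists>\<epsilon>>0. (SUP t\<in>{0..\<epsilon>}. pairing (c t) (\<lambda>m. (real m)\<^sup>2)) < \<infinity>"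
proof -
  have nn: "\<And>t m. t \<ge> 0 \<Longrightarrow> m \<ge> 1 \<Longrightarrow> c t m \<ge> 0"
    and cont: "\<And>m. m \<ge> 1 \<Longrightarrow> continuous_on {0..} (\<lambda>t. c t m)"
    and eq: "\<And>t f. t \<ge> 0 \<Longrightarrow> (\<forall>m. f m \<ge> 0) \<Longrightarrow> finite {m. f m \<noteq> 0} \<Longrightarrow>
        pairing_fin (c t) f - pairing_fin (c 0) f = 1/2 * (LINT s:{0..t}|lborel. coag (c s) f)"
    using assms(1) unfolding smol_solution_def by auto
  define K where "K = enn2real (pairing (c 0) (\<lambda>m. (real m)\<^sup>2))"
  have K0: "K \<ge> 0" by (simp add: K_def)
  have MK: "Mn (c 0) n \<le> K" for n
  proof -
    have "ennreal (Mn (c 0) n) \<le> pairing (c 0) (\<lambda>m. (real m)\<^sup>2)" by (rule partial_le) (auto intro: nn)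
    also have "\<dots> = ennreal K" using assms(2) unfolding K_def by (simp add: less_top[symmetric])
    finally show ?thesis using K0 by simp
  qed
  define \<epsilon> where "\<epsilon> = 1 / (2 * (2*K+1)\<^sup>2)"
  have epos: "\<epsilon> > 0" using K0 unfolding \<epsilon>_def by (simp add: add_pos_nonneg)
  have contM: "continuous_on {0..} (\<lambda>t. Mn (c t) n)" for n
    unfolding Mn_def by (intro continuous_on_sum continuous_on_mult_right) (auto intro: cont)
  have Mnn: "t \<ge> 0 \<Longrightarrow> Mn (c t) n \<ge> 0" for t n unfolding Mn_def by (auto intro!: sum_nonneg mult_nonneg_nonneg nn)
  have ineq: "Mn (c t) n \<le> Mn (c 0) n + (LINT s:{0..t}|lborel. (Mn (c s) n)\<^sup>2)" if t: "t \<ge> 0" for t n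
  proof -
    have fin: "finite {m. fn n m \<noteq> 0}" by (rule finite_subset[of _ "{..n}"]) (auto simp: fn_def)
    have e: "Mn (c t) n - Mn (c 0) n = 1/2 * (LINT s:{0..t}|lborel. coag (c s) (fn n))"
    proof -
      have "\<forall>m. fn n m \<ge> 0" by (simp add: fn_def)
      from eq[OF t this fin] show ?thesis by (simp only: pf_fn)
    qed
    have contS: "continuous_on {0..t} (\<lambda>s. 2 * (Mn (c s) n)\<^sup>2)"
      by (intro continuous_intros continuous_on_subset[OF contM]) auto
    have intS: "set_integrable lborel {0..t} (\<lambda>s. 2 * (Mn (c s) n)\<^sup>2)"
      by (rule borel_integrable_atLeastAtMost'[OF contS])
    have "(LINT s:{0..t}|lborel. coag (c s) (fn n)) \<le> (LINT s:{0..t}|lborel. 2 * (Mn (c s) n)\<^sup>2)"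
    proof (cases "set_integrable lborel {0..t} (\<lambda>s. coag (c s) (fn n))")
      case True
      show ?thesis
        by (rule set_integral_mono[OF True intS]) (auto intro!: coag_le nn)
    next
      case False
      hence "(LINT s:{0..t}|lborel. coag (c s) (fn n)) = 0"
        unfolding set_lebesgue_integral_def set_integrable_def by (simp add: not_integrable_integral_eq)
      moreover have "(LINT s:{0..t}|lborel. 2 * (Mn (c s) n)\<^sup>2) \<ge> 0"
        unfolding set_lebesgue_integral_def by (rule Bochner_Integration.integral_nonneg) (auto simp: indicator_def)
      ultimately show ?thesis by simp
    qed
    also have "\<dots> = 2 * (LINT s:{0..t}|lborel. (Mn (c s) n)\<^sup>2)" by simp
    finally show ?thesis using e by linarith
  qed
  have bd: "Mn (c t) n \<le> 2*K+1" if "t \<in> {0..\<epsilon>}" for t n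
    using barrier[of "\<lambda>t. Mn (c t) n" K t, OF contM Mnn _ K0 ineq] MK that by (auto simp: \<epsilon>_def)
  have "(SUP t\<in>{0..\<epsilon>}. pairing (c t) (\<lambda>m. (real m)\<^sup>2)) \<le> ennreal (2*K+1)"
  proof (rule SUP_least)
    fix t assume t: "t \<in> {0..\<epsilon>}"
    show "pairing (c t) (\<lambda>m. (real m)\<^sup>2) \<le> ennreal (2*K+1)"
      by (rule pairing_le) (use t in \<open>auto intro: nn bd\<close>)
  qed
  also have "\<dots> < \<infinity>" by simp
  finally show ?thesis using epos by blast
qed

end
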